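(* Let $r\ge2$ be an integer and $\psi\in C_p(\mathbb{R})$. Assume there is a constant $m>0$ such that $m\,d(x)\le\psi(x)$ for all $x\in[0,1]$. Then $$\frac{mr}{r-1}\,x(1-x)\le m\,\tau_r(x)\le U_\psi(x),\qquad x\in[0,1].$$
   Context: $C_p(\mathbb{R})$ denotes the set of all continuous functions $f:\mathbb{R}\to\mathbb{R}$ periodic with period $1$ with $f(0)=0$. $d(x)=\min\{|x-z|: z\in\mathbb{Z}\}$ is the distance to $\mathbb{Z}$. For $\psi\in C_p(\mathbb{R})$, $U_\psi(x)=\sum_{j=0}^\infty r^{-j}\psi(r^jx)$, and $\tau_r=U_d$, i.e. $\tau_r(x)=\sum_{j=0}^\infty r^{-j}d(r^jx)$. *)

theory Defs
  imports "HOL-Analysis.Analysis"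
begin

definition Cp :: "(real \<Rightarrow> real) set" where
  "Cp = {f. continuous_on UNIV f \<and> (\<forall>x. f (x + 1) = f x) \<and> f 0 = 0}"

definition dZ :: "real \<Rightarrow> real" where
  "dZ x = (INF z\<in>\<int>. \<bar>x - z\<bar>)"

definition U :: "real \<Rightarrow> (real \<Rightarrow> real) \<Rightarrow> real \<Rightarrow> real" where
  "U r \<psi> x = (\<Sum>j. r powi (- int j) * \<psi> (r ^ j * x))"

definition tau :: "real \<Rightarrow> real \<Rightarrow> real" where
  "tau r = U r dZ"

end

theory Submission
  imports Defs
begin

lemma dZ_eq: "dZ x = min (frac x) (1 - frac x)"
proof -
  let ?f = "\<lambda>z. \<bar>x - z\<bar>"
  have ne: "\<int> \<noteq> ({}::real set)" using Ints_0 by blast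
  have bdd: "bdd_below (?f ` \<int>)"
    by (rule bdd_belowI[of _ 0]) (simp only: image_iff, metis abs_ge_zero)
  have fx: "frac x = x - of_int (floor x)" by (simp add: frac_def)
  have lower: "min (frac x) (1 - frac x) \<le> \<bar>x - z\<bar>" if zI: "z \<in> \<int>" for z
  proof -
    obtain k where k: "z = of_int k" using zI by (rule Ints_cases)
    show ?thesis
    proof (cases "k \<le> floor x")
      case True
      hence "real_of_int k \<le> of_int (floor x)" by (simp only: of_int_le_iff)
      hence "frac x \<le> \<bar>x - z\<bar>" using k fx by linarith
      thus ?thesis by (meson min.cobounded1 order_trans)
    next
      case False
      hence "k \<ge> floor x + 1" by linarith
      hence "real_of_int k \<ge> of_int (floor x + 1)" by (simp only: of_int_le_iff)
      hence "1 - frac x \<le> \<bar>x - z\<bar>" using k fx by simp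
      thus ?thesis by (meson min.cobounded2 order_trans)
    qed
  qed
  have a1: "dZ x \<le> frac x"
  proof -
    have "dZ x \<le> ?f (of_int (floor x))" unfolding dZ_def
      by (rule cINF_lower[OF bdd]) (rule Ints_of_int)
    thus ?thesis using fx by simp
  qed
  have a2: "dZ x \<le> 1 - frac x"
  proof -
    have "dZ x \<le> ?f (of_int (floor x + 1))" unfolding dZ_def
      by (rule cINF_lower[OF bdd]) (rule Ints_of_int)
    moreover have "?f (of_int (floor x + 1)) = 1 - frac x"
      using fx frac_lt_1[of x] by simp
    ultimately show ?thesis by simp
  qed
  have a3: "min (frac x) (1 - frac x) \<le> dZ x" unfolding dZ_def
    by (rule cINF_greatest[OF ne]) (rule lower)
  have "dZ x \<le> min (frac x) (1 - frac x)" using a1 a2 by simp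
  thus ?thesis using a3 by (rule antisym)
qed

lemma dZ_nonneg: "0 \<le> dZ x" and dZ_le: "dZ x \<le> 1/2"
  using frac_ge_0[of x] frac_lt_1[of x] by (auto simp: dZ_eq min_def)

lemma dZ_01: "x \<in> {0..1} \<Longrightarrow> dZ x = min x (1 - x)"
  by (cases "x = 1") (auto simp: dZ_eq)

lemma Cp_periodic:
  assumes "\<psi> \<in> Cp" shows "\<psi> (x + of_int k) = \<psi> x"
proof -
  have p: "\<psi> (y + 1) = \<psi> y" for y using assms by (simp add: Cp_def)
  have n: "\<psi> (y + real n) = \<psi> y" for y n
  proof (induction n)
    case (Suc n)
    have "y + real (Suc n) = (y + real n) + 1" by simp
    thus ?case using Suc p by metis
  qed simp
  show ?thesis
  proof (cases "k \<ge> 0")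
    case True
    define n where "n = nat k"
    have "k = int n" using True by (simp add: n_def)
    thus ?thesis using n by simp
  next
    case False
    define n where "n = nat (- k)"
    have kn: "k = - int n" using False by (simp add: n_def)
    have "\<psi> (x + of_int k + real n) = \<psi> (x + of_int k)" by (rule n)
    thus ?thesis using kn by simp
  qed
qed

lemma Cp_frac: "\<psi> \<in> Cp \<Longrightarrow> \<psi> x = \<psi> (frac x)"
  using Cp_periodic[of \<psi> "frac x" "floor x"] by (simp add: frac_def)

lemma Cp_bounded:
  assumes "\<psi> \<in> Cp" shows "\<exists>B. \<forall>x. \<bar>\<psi> x\<bar> \<le> B"
proof -
  have "continuous_on {0..1} \<psi>" using assms unfolding Cp_def
    using continuous_on_subset by blast
  hence "compact (\<psi> ` {0..1})" by (rule compact_continuous_image) simp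
  hence "bounded (\<psi> ` {0..1})" by (rule compact_imp_bounded)
  then obtain B where B: "\<forall>y\<in>\<psi> ` {0..1}. norm y \<le> B" using bounded_iff by blast
  have "\<bar>\<psi> x\<bar> \<le> B" for x
  proof -
    have "frac x \<in> {0..1}" using frac_lt_1[of x] by auto
    thus ?thesis using B Cp_frac[OF assms, of x] by auto
  qed
  thus ?thesis by blast
qed

lemma powi_conv: "(R::real) powi (- int j) = (1/R) ^ j"
  by (simp add: power_int_minus power_one_over inverse_eq_divide)

lemma summ_bounded:
  assumes "(R::real) \<ge> 2" and "\<forall>x. \<bar>f x\<bar> \<le> B"
  shows "summable (\<lambda>j. (1/R)^j * f (R^j * x))"
proof (rule summable_comparison_test[where g="\<lambda>j. B * (1/R)^j"])
  show "\<exists>N. \<forall>n\<ge>N. norm ((1/R)^n * f (R^n * x)) \<le> B * (1/R)^n"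
    using assms by (auto simp: abs_mult mult.commute intro!: mult_right_mono)
  show "summable (\<lambda>j. B * (1/R)^j)" using assms
    by (intro summable_mult summable_geometric) auto
qed

definition qf :: "real \<Rightarrow> real \<Rightarrow> real" where
  "qf R t = R / (R - 1) * frac t * (1 - frac t)"

lemma key_ineq_01:
  fixes R x y :: real
  assumes R: "R \<ge> 2" and x: "0 \<le> x" "x \<le> 1/2" and y: "0 \<le> y" "y \<le> 1"
    and c: "R * x \<ge> 1 \<or> y = R * x"
  shows "R/(R-1) * x * (1 - x) \<le> x + R/(R-1) * y * (1-y) / R"
proof -
  have yy: "0 \<le> y * (1 - y)" using y by simp
  have "R * x * (1 - x) \<le> (R - 1) * x + y * (1 - y)"
  proof (cases "R * x \<ge> 1")
    case True
    have "R * x * (1 - x) - (R - 1) * x = x * (1 - R * x)" by algebra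
    also have "\<dots> \<le> 0" using True x by (simp add: mult_nonneg_nonpos)
    finally show ?thesis using yy by linarith
  next
    case False
    hence yv: "y = R * x" using c by auto
    have "(R - 1) * x + y * (1 - y) - R * x * (1 - x) = (R - 1) * x * (1 - R * x)"
      unfolding yv by algebra
    also have "\<dots> \<ge> 0" using False x R by simp
    finally show ?thesis by linarith
  qed
  hence "R * x * (1 - x) / (R - 1) \<le> ((R - 1) * x + y * (1 - y)) / (R - 1)"
    using R by (intro divide_right_mono) auto
  moreover have "R/(R-1) * x * (1 - x) = R * x * (1 - x) / (R - 1)" by simp
  moreover have "x + R/(R-1) * y * (1-y) / R = ((R - 1) * x + y * (1 - y)) / (R - 1)"
    using R by (simp add: field_simps)
  ultimately show ?thesis by simp
qed

lemma key_ineq: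
  fixes r :: nat and t :: real
  assumes r: "r \<ge> 2"
  shows "qf (real r) t \<le> dZ t + qf (real r) (real r * t) / real r"
proof -
  define R where "R = real r"
  have R: "R \<ge> 2" using r by (simp add: R_def)
  define x where "x = frac t"
  have x01: "0 \<le> x" "x < 1" using frac_lt_1[of t] by (auto simp: x_def)
  have fr: "frac (R * t) = frac (R * x)"
  proof -
    have "R * t = R * x + of_int (int r * floor t)" by (simp add: R_def x_def frac_def algebra_simps)
    thus ?thesis by (metis frac_add_of_int_right)
  qed
  define y where "y = frac (R * x)"
  have y01: "0 \<le> y" "y \<le> 1" using frac_lt_1[of "R*x"] by (auto simp: y_def)
  have dz: "dZ t = min x (1 - x)" by (simp add: dZ_eq x_def)
  show ?thesis
  proof (cases "x \<le> 1/2")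
    case True
    have c: "R * x \<ge> 1 \<or> y = R * x"
      using x01 R by (auto simp: y_def frac_eq)
    from key_ineq_01[OF R x01(1) True y01 c]
    show ?thesis unfolding qf_def R_def[symmetric] fr dz y_def[symmetric] x_def[symmetric]
      using True by simp
  next
    case False
    define u where "u = 1 - x"
    have u: "0 \<le> u" "u \<le> 1/2" using False x01 by (auto simp: u_def)
    have c: "R * u \<ge> 1 \<or> (1 - y) = R * u"
    proof (cases "R * u \<ge> 1")
      case False
      have "u > 0" using x01 by (simp add: u_def)
      hence "R * u > 0" using R by simp
      have "frac (R * x) = 1 - R * u" unfolding frac_unique_iff
      proof (intro conjI)
        have "R * x - (1 - R * u) = of_int (int r - 1)" by (simp add: u_def R_def algebra_simps)
        thus "R * x - (1 - R * u) \<in> \<int>" by (metis Ints_of_int)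
      qed (use False \<open>R * u > 0\<close> in auto)
      thus ?thesis by (simp add: y_def)
    qed simp
    have y01': "0 \<le> 1 - y" "1 - y \<le> 1" using y01 by auto
    from key_ineq_01[OF R u y01' c]
    have "R/(R-1) * u * (1 - u) \<le> u + R/(R-1) * (1 - y) * y / R" by simp
    moreover have "u * (1 - u) = x * (1 - x)" by (simp add: u_def algebra_simps)
    ultimately show ?thesis unfolding qf_def R_def[symmetric] fr dz y_def[symmetric] x_def[symmetric]
      using False by (simp add: u_def algebra_simps)
  qed
qed

lemma qf_bounds: "(R::real) \<ge> 2 \<Longrightarrow> 0 \<le> qf R t \<and> qf R t \<le> R / (R - 1)"
proof -
  assume R: "R \<ge> 2"
  have a: "0 \<le> frac t * (1 - frac t)" "frac t * (1 - frac t) \<le> 1"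
    using frac_ge_0[of t] frac_lt_1[of t] by (auto simp: mult_le_one)
  have c: "R / (R - 1) \<ge> 0" using R by simp
  have e: "qf R t = R / (R - 1) * (frac t * (1 - frac t))" by (simp add: qf_def)
  show ?thesis unfolding e using mult_nonneg_nonneg[OF c a(1)] mult_left_mono[OF a(2) c] by linarith
qed

lemma iter:
  fixes r :: nat
  assumes r: "r \<ge> 2"
  shows "qf (real r) x \<le> (\<Sum>j<n. (1/real r)^j * dZ (real r^j * x)) + (1/real r)^n * qf (real r) (real r^n * x)"
proof (induction n arbitrary: x)
  case 0
  show ?case by simp
next
  case (Suc n)
  define R where "R = real r"
  have R: "R \<ge> 2" using r by (simp add: R_def)
  have IH: "qf R (R * x) \<le> (\<Sum>j<n. (1/R)^j * dZ (R^j * (R * x))) + (1/R)^n * qf R (R^n * (R * x))"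
    using Suc unfolding R_def by blast
  have k: "qf R x \<le> dZ x + qf R (R * x) / R" using key_ineq[OF r] unfolding R_def by blast
  have "qf R (R * x) / R \<le> ((\<Sum>j<n. (1/R)^j * dZ (R^j * (R * x))) + (1/R)^n * qf R (R^n * (R * x))) / R"
    using IH R by (intro divide_right_mono) auto
  also have "\<dots> = (\<Sum>j<n. (1/R)^Suc j * dZ (R^Suc j * x)) + (1/R)^Suc n * qf R (R^Suc n * x)"
    by (simp add: sum_divide_distrib add_divide_distrib mult.assoc mult.left_commute)
  finally have "qf R x \<le> dZ x + (\<Sum>j<n. (1/R)^Suc j * dZ (R^Suc j * x)) + (1/R)^Suc n * qf R (R^Suc n * x)"
    using k by linarith
  also have "dZ x + (\<Sum>j<n. (1/R)^Suc j * dZ (R^Suc j * x)) = (\<Sum>j<Suc n. (1/R)^j * dZ (R^j * x))"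
    by (simp only: sum.lessThan_Suc_shift power_0 mult_1_left mult_1_right)
  finally show ?case unfolding R_def .
qed

lemma tau_lower:
  fixes r :: nat
  assumes r: "r \<ge> 2"
  shows "qf (real r) x \<le> tau (real r) x"
proof -
  define R where "R = real r"
  have R: "R \<ge> 2" using r by (simp add: R_def)
  define f where "f = (\<lambda>j. (1/R)^j * dZ (R^j * x))"
  have tau: "tau R x = suminf f" unfolding tau_def U_def f_def powi_conv ..
  have B: "\<forall>x. \<bar>dZ x\<bar> \<le> 1/2" using dZ_nonneg dZ_le by simp
  have sf: "summable f" unfolding f_def by (rule summ_bounded[OF R B])
  have fnn: "\<And>j. 0 \<le> f j" unfolding f_def using R dZ_nonneg by simp
  have bnd: "qf R x \<le> tau R x + (1/R)^n * (R / (R - 1))" for n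
  proof -
    have "qf R x \<le> sum f {..<n} + (1/R)^n * qf R (R^n * x)"
      using iter[OF r, of x n] unfolding R_def[symmetric] f_def .
    also have "sum f {..<n} \<le> suminf f" by (intro sum_le_suminf) (use sf fnn in auto)
    also have "(1/R)^n * qf R (R^n * x) \<le> (1/R)^n * (R / (R - 1))"
      using qf_bounds[OF R] R by (intro mult_left_mono) auto
    finally show ?thesis using tau by simp
  qed
  show ?thesis
  proof (rule ccontr)
    assume "\<not> ?thesis"
    hence d: "0 < (qf R x - tau R x) / (R / (R - 1))" using R unfolding R_def by simp
    have "1/R < 1" using R by simp
    then obtain n where n: "(1/R)^n < (qf R x - tau R x) / (R / (R - 1))"
      using real_arch_pow_inv[OF d] by blast
    have "(1/R)^n * (R / (R - 1)) < qf R x - tau R x"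
      using n R by (simp add: field_simps)
    thus False using bnd[of n] by linarith
  qed
qed

theorem lemma3p3:
  fixes r :: nat and \<psi> :: "real \<Rightarrow> real" and m :: real
  assumes "r \<ge> 2" and "\<psi> \<in> Cp" and "m > 0"
    and "\<forall>x\<in>{0..1}. m * dZ x \<le> \<psi> x"
  shows "\<forall>x\<in>{0..1}. m * real r / (real r - 1) * x * (1 - x) \<le> m * tau (real r) x
                       \<and> m * tau (real r) x \<le> U (real r) \<psi> x"
proof
  fix x :: real assume x: "x \<in> {0..1}"
  define R where "R = real r"
  have R: "R \<ge> 2" using assms(1) by (simp add: R_def)
  have "x * (1 - x) = frac x * (1 - frac x)"
  proof (cases "x = 1")
    case False thus ?thesis using x by simp
  qed simp
  hence "m * R / (R - 1) * x * (1 - x) = m * qf R x" by (simp add: qf_def)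
  also have "\<dots> \<le> m * tau R x"
    using tau_lower[OF assms(1), of x] assms(3) unfolding R_def[symmetric] by simp
  finally have A: "m * R / (R - 1) * x * (1 - x) \<le> m * tau R x" .
  define f where "f = (\<lambda>j. (1/R)^j * dZ (R^j * x))"
  define g where "g = (\<lambda>j. (1/R)^j * \<psi> (R^j * x))"
  have tau: "tau R x = suminf f" unfolding tau_def U_def f_def powi_conv ..
  have Ug: "U R \<psi> x = suminf g" unfolding U_def g_def powi_conv ..
  have B: "\<forall>x. \<bar>dZ x\<bar> \<le> 1/2" using dZ_nonneg dZ_le by simp
  have sf: "summable f" unfolding f_def by (rule summ_bounded[OF R B])
  obtain C where C: "\<forall>x. \<bar>\<psi> x\<bar> \<le> C" using Cp_bounded[OF assms(2)] by blast
  have sg: "summable g" unfolding g_def by (rule summ_bounded[OF R C])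
  have pt: "m * dZ y \<le> \<psi> y" for y
  proof -
    have "frac y \<in> {0..1}" using frac_lt_1[of y] by auto
    hence "m * dZ (frac y) \<le> \<psi> (frac y)" using assms(4) by blast
    moreover have "dZ (frac y) = dZ y" by (simp add: dZ_eq)
    ultimately show ?thesis using Cp_frac[OF assms(2), of y] by simp
  qed
  have "m * tau R x = (\<Sum>j. m * f j)" using tau suminf_mult[OF sf, of m] by simp
  also have "\<dots> \<le> suminf g"
  proof (rule suminf_le)
    fix j
    have "0 \<le> (1/R)^j" using R by simp
    thus "m * f j \<le> g j" unfolding f_def g_def using pt[of "R^j * x"]
      by (metis mult.left_commute mult_left_mono)
  qed (use sf sg summable_mult in auto)
  finally show "m * real r / (real r - 1) * x * (1 - x) \<le> m * tau (real r) x
                       \<and> m * tau (real r) x \<le> U (real r) \<psi> x"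
    using A Ug unfolding R_def by simp
qed

end
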